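(* Let $n\ge3$ and $k\ge0$ be integers with $n\le k$. If $S\subseteq\mathrm{Inc}(A,B)$ is an independent set in $G_n^k$ that is not reversible, then \[|S|\le \frac{(k+1)(k+2)}{2}+2-n.\]
   Context: For integers $n\ge3$, $k\ge0$, the crown $S_n^k$ is the poset with ground set $A\cup B$, $A=\{a_1,\dots,a_{n+k}\}$, $B=\{b_1,\dots,b_{n+k}\}$, indices cyclic modulo $n+k$; elements of $A$ are pairwise incomparable, as are elements of $B$, and $a_i$ is incomparable to $b_j$ when $j\in\{i,i+1,\dots,i+k\}$ (mod $n+k$), while $a_i<b_j$ otherwise. $\mathrm{Inc}(A,B)$ is the set of pairs $(a,b)\in A\times B$ with $a$ incomparable to $b$. The graph $G_n^k$ has vertex set $\mathrm{Inc}(A,B)$, with $(a,b)$ adjacent to $(x,y)$ iff $a<y$ and $x<b$ in $S_n^k$. A set $R\subseteq\mathrm{Inc}(A,B)$ is reversible if there is a linear extension $L$ of $S_n^k$ with $b<a$ in $L$ for all $(a,b)\in R$. *)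

theory Defs
  imports Complex_Main
begin

text \<open>Elements of the crown S_n^k: a_i is CA i, b_j is CB j, with indices in {0..<n+k}
  (cyclic modulo n+k).\<close>
datatype crown_elem = CA nat | CB nat

definition crown_ground :: "nat \<Rightarrow> nat \<Rightarrow> crown_elem set" where
  "crown_ground n k = {CA i | i. i < n + k} \<union> {CB j | j. j < n + k}"

definition crown_inc_idx :: "nat \<Rightarrow> nat \<Rightarrow> nat \<Rightarrow> nat \<Rightarrow> bool" where
  "crown_inc_idx n k i j \<longleftrightarrow> (\<exists>t\<le>k. j = (i + t) mod (n + k))"

definition crown_less :: "nat \<Rightarrow> nat \<Rightarrow> crown_elem \<Rightarrow> crown_elem \<Rightarrow> bool" where
  "crown_less n k x y \<longleftrightarrow>
     (\<exists>i j. x = CA i \<and> y = CB j \<and> i < n + k \<and> j < n + k \<and> \<not> crown_inc_idx n k i j)"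

definition crown_Inc :: "nat \<Rightarrow> nat \<Rightarrow> (crown_elem \<times> crown_elem) set" where
  "crown_Inc n k = {(CA i, CB j) | i j. i < n + k \<and> j < n + k \<and> crown_inc_idx n k i j}"

definition G_adj :: "nat \<Rightarrow> nat \<Rightarrow> crown_elem \<times> crown_elem \<Rightarrow> crown_elem \<times> crown_elem \<Rightarrow> bool" where
  "G_adj n k p q \<longleftrightarrow> crown_less n k (fst p) (snd q) \<and> crown_less n k (fst q) (snd p)"

definition G_independent :: "nat \<Rightarrow> nat \<Rightarrow> (crown_elem \<times> crown_elem) set \<Rightarrow> bool" where
  "G_independent n k S \<longleftrightarrow> S \<subseteq> crown_Inc n k \<and> (\<forall>p\<in>S. \<forall>q\<in>S. \<not> G_adj n k p q)"

definition linear_extension :: "nat \<Rightarrow> nat \<Rightarrow> crown_elem rel \<Rightarrow> bool" where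
  "linear_extension n k L \<longleftrightarrow>
     L \<subseteq> crown_ground n k \<times> crown_ground n k \<and>
     strict_linear_order_on (crown_ground n k) L \<and>
     (\<forall>x y. crown_less n k x y \<longrightarrow> (x, y) \<in> L)"

definition reversible :: "nat \<Rightarrow> nat \<Rightarrow> (crown_elem \<times> crown_elem) set \<Rightarrow> bool" where
  "reversible n k R \<longleftrightarrow> (\<exists>L. linear_extension n k L \<and> (\<forall>(a, b)\<in>R. (b, a) \<in> L))"

end

theory Submission
  imports Defs
begin

lemma lin_ext_exists:
  assumes "finite X" "Q \<subseteq> X \<times> X"
    and "\<forall>Y\<subseteq>X. Y \<noteq> {} \<longrightarrow> (\<exists>y\<in>Y. \<forall>w\<in>Y. (w,y) \<notin> Q)"
  shows "\<exists>L \<subseteq> X \<times> X. strict_linear_order_on X L \<and> Q \<subseteq> L"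
  using assms
proof (induction X arbitrary: Q rule: finite_psubset_induct)
  case (psubset X)
  show ?case
  proof (cases "X = {}")
    case True
    then show ?thesis using psubset.prems
      by (auto simp: strict_linear_order_on_def total_on_def irrefl_def trans_def)
  next
    case False
    obtain y where y: "y \<in> X" "\<forall>w\<in>X. (w,y) \<notin> Q" using psubset.prems(2) False by blast
    define X' where "X' = X - {y}"
    have X'sub: "X' \<subset> X" using y X'_def by auto
    have "\<exists>L'\<subseteq>X'\<times>X'. strict_linear_order_on X' L' \<and> Q \<inter> (X' \<times> X') \<subseteq> L'"
      apply (rule psubset.IH[OF X'sub])
       apply blast
      using psubset.prems(2) X'sub by (metis IntD1 order.strict_trans2 order_refl psubset_imp_subset subset_trans)
    then obtain L' where L': "L' \<subseteq> X'\<times>X'" "strict_linear_order_on X' L'" "Q \<inter> (X' \<times> X') \<subseteq> L'"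
      by blast
    define L where "L = L' \<union> {y} \<times> X'"
    have yX': "y \<notin> X'" using X'_def by auto
    have "trans L"
      using L'(1,2) yX' unfolding L_def strict_linear_order_on_def trans_def by blast
    moreover have "irrefl L"
      using L'(1,2) yX' unfolding L_def strict_linear_order_on_def irrefl_def by blast
    moreover have "total_on X L"
      using L'(2) y(1) unfolding L_def strict_linear_order_on_def total_on_def X'_def by blast
    moreover have "L \<subseteq> X \<times> X" using L'(1) y(1) X'_def unfolding L_def by blast
    moreover have "Q \<subseteq> L"
    proof
      fix p assume p: "p \<in> Q"
      obtain u v where uv: "p = (u,v)" by (cases p)
      have "u \<in> X" "v \<in> X" using p uv psubset.prems(1) by auto
      have "v \<noteq> y" using y(2) \<open>u \<in> X\<close> p uv by blast
      show "p \<in> L"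
      proof (cases "u = y")
        case True then show ?thesis using uv \<open>v \<in> X\<close> \<open>v \<noteq> y\<close> X'_def L_def by auto
      next
        case False then show ?thesis using uv \<open>v \<in> X\<close> \<open>u \<in> X\<close> \<open>v \<noteq> y\<close> X'_def L_def L'(3) p by auto
      qed
    qed
    ultimately show ?thesis unfolding strict_linear_order_on_def by blast
  qed
qed


definition plusset :: "nat set \<Rightarrow> nat \<Rightarrow> nat set" where
  "plusset T n = (\<Union>t\<in>T. {t+1..t+n-1})"

lemma plusset_finite: "finite T \<Longrightarrow> finite (plusset T n)"
  unfolding plusset_def by auto

lemma plusset_card1:
  assumes "finite T" "T \<noteq> {}" "2 \<le> n"
  shows "card T + (n-2) \<le> card (plusset T n)"
proof -
  define M where "M = Max T"
  have MT: "M \<in> T" "\<forall>t\<in>T. t \<le> M" using assms M_def by auto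
  have sub: "Suc ` T \<union> {M+2..M+n-1} \<subseteq> plusset T n"
  proof
    fix x assume "x \<in> Suc ` T \<union> {M+2..M+n-1}"
    then consider (a) t where "t \<in> T" "x = Suc t" | (b) "x \<in> {M+2..M+n-1}" by blast
    then show "x \<in> plusset T n"
    proof cases
      case a then show ?thesis unfolding plusset_def using assms(3) by (intro UN_I[of t]) auto
    next
      case b then show ?thesis unfolding plusset_def using MT(1) by (intro UN_I[of M]) auto
    qed
  qed
  have disj: "Suc ` T \<inter> {M+2..M+n-1} = {}" using MT by force
  have "card (Suc ` T \<union> {M+2..M+n-1}) = card T + (n-2)"
    using card_Un_disjoint[OF _ _ disj] assms(1) card_image[of Suc T] by simp
  then show ?thesis using card_mono[OF plusset_finite[OF assms(1)] sub] by simp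
qed

lemma plusset_card2:
  assumes "finite T" "2 \<le> n" "t0 \<in> T" "s0 \<in> T" "t0 < s0"
    and gap: "\<forall>s\<in>T. t0 < s \<longrightarrow> t0 + n \<le> s"
  shows "card T + 2*(n-2) \<le> card (plusset T n)"
proof -
  define M where "M = Max T"
  have "T \<noteq> {}" using assms(3) by auto
  then have MT: "M \<in> T" "\<forall>t\<in>T. t \<le> M" using assms(1) M_def by auto
  have "t0 + n \<le> M" using gap MT assms by (meson le_trans less_le_trans)
  have sub: "(Suc ` T \<union> {t0+2..t0+n-1}) \<union> {M+2..M+n-1} \<subseteq> plusset T n"
  proof
    fix x assume "x \<in> (Suc ` T \<union> {t0+2..t0+n-1}) \<union> {M+2..M+n-1}"
    then consider (a) t where "t \<in> T" "x = Suc t" | (b) "x \<in> {M+2..M+n-1}" | (c) "x \<in> {t0+2..t0+n-1}" by blast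
    then show "x \<in> plusset T n"
    proof cases
      case a then show ?thesis unfolding plusset_def using assms(2) by (intro UN_I[of t]) auto
    next
      case b then show ?thesis unfolding plusset_def using MT(1) by (intro UN_I[of M]) auto
    next
      case c then show ?thesis unfolding plusset_def using assms(3) by (intro UN_I[of t0]) auto
    qed
  qed
  have disj1: "Suc ` T \<inter> {t0+2..t0+n-1} = {}"
  proof -
    { fix s assume "s \<in> T" "Suc s \<in> {t0+2..t0+n-1}"
      then have False using gap by (cases "t0 < s") auto }
    then show ?thesis by blast
  qed
  have disj2: "(Suc ` T \<union> {t0+2..t0+n-1}) \<inter> {M+2..M+n-1} = {}"
    using MT \<open>t0 + n \<le> M\<close> by force
  have c1: "card (Suc ` T \<union> {t0+2..t0+n-1}) = card T + (n-2)"
    using card_Un_disjoint[OF _ _ disj1] assms(1) card_image[of Suc T] by simp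
  have "card ((Suc ` T \<union> {t0+2..t0+n-1}) \<union> {M+2..M+n-1}) = card T + 2*(n-2)"
    using card_Un_disjoint[OF _ _ disj2] assms(1) c1 by simp
  then show ?thesis using card_mono[OF plusset_finite[OF assms(1)] sub] by simp
qed

lemma plusset_interval:
  assumes "finite T" "T \<noteq> {}" "2 \<le> n"
    and ng: "\<forall>t0\<in>T. (\<exists>s\<in>T. t0 < s) \<longrightarrow> (\<exists>s\<in>T. t0 < s \<and> s < t0 + n)"
  shows "plusset T n = {Min T + 1 .. Max T + n - 1}"
proof
  show "plusset T n \<subseteq> {Min T + 1 .. Max T + n - 1}"
  proof
    fix x assume "x \<in> plusset T n"
    then obtain t where t: "t \<in> T" "x \<in> {t+1..t+n-1}" unfolding plusset_def by blast
    have "Min T \<le> t" "t \<le> Max T" using t(1) assms(1) by auto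
    then show "x \<in> {Min T + 1 .. Max T + n - 1}" using t(2) by auto
  qed
next
  show "{Min T + 1 .. Max T + n - 1} \<subseteq> plusset T n"
  proof
    fix y assume y: "y \<in> {Min T + 1 .. Max T + n - 1}"
    define A where "A = {s\<in>T. s < y}"
    have "Min T \<in> A" using y assms(1,2) A_def by auto
    then have Ane: "A \<noteq> {}" and Afin: "finite A" using assms(1) A_def by auto
    define t where "t = Max A"
    have tA: "t \<in> A" "\<forall>s\<in>A. s \<le> t" using Ane Afin t_def by auto
    have tT: "t \<in> T" "t < y" using tA A_def by auto
    show "y \<in> plusset T n"
    proof (cases "y \<le> t + n - 1")
      case True
      then show ?thesis unfolding plusset_def using tT by force
    next
      case False
      then have yge: "t + n \<le> y" by simp
      show ?thesis
      proof (cases "\<exists>s\<in>T. t < s")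
        case True
        then obtain s where s: "s \<in> T" "t < s" "s < t + n" using ng tT by blast
        then have "s \<in> A" using yge A_def by auto
        then show ?thesis using tA s by force
      next
        case False
        then have "t = Max T" using tT assms(1) by (intro Max_eqI[symmetric]) (auto simp: not_less)
        then show ?thesis using y yge assms(3) by auto
      qed
    qed
  qed
qed


lemma card_lt_pairs:
  fixes V :: "nat set"
  assumes "finite V"
  shows "2 * card {p\<in>V\<times>V. fst p < snd p} = card V * (card V - 1)"
proof -
  define C where "C = {p\<in>V\<times>V. fst p < snd p}"
  define C' where "C' = {p\<in>V\<times>V. snd p < fst p}"
  define Dg where "Dg = (\<lambda>a. (a,a)) ` V"
  have fin: "finite (V \<times> V)" using assms by auto
  have eq: "V \<times> V = Dg \<union> C \<union> C'" unfolding C_def C'_def Dg_def by auto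
  have sw: "C' = prod.swap ` C" unfolding C_def C'_def by force
  have cC': "card C' = card C" unfolding sw by (rule card_image) (auto simp: inj_on_def)
  have cD: "card Dg = card V" unfolding Dg_def by (rule card_image) (simp add: inj_on_def)
  have d1: "Dg \<inter> C = {}" unfolding Dg_def C_def by auto
  have d2: "(Dg \<union> C) \<inter> C' = {}" unfolding Dg_def C_def C'_def by auto
  have fD: "finite Dg" "finite C" "finite C'" using fin eq by (metis finite_Un)+
  have "card (V \<times> V) = card Dg + card C + card C'"
    unfolding eq using card_Un_disjoint[OF _ _ d2] card_Un_disjoint[OF _ _ d1] fD by simp
  then have "card V * card V = card V + 2 * card C" using cC' cD by (simp add: card_cartesian_product)
  then show ?thesis unfolding C_def[symmetric]
    by (metis add_diff_cancel_left' diff_mult_distrib2 mult.right_neutral)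
qed

lemma pair_count:
  fixes V :: "nat set" and H :: "nat \<Rightarrow> nat set"
  assumes "finite V" "\<forall>a\<in>V. finite (H a)" "\<forall>a\<in>V. a \<in> H a"
    and pc: "\<forall>a\<in>V. \<forall>x\<in>V. a \<noteq> x \<longrightarrow> a \<in> H x \<or> x \<in> H a"
  shows "2 * card V + card V * (card V - 1) + 2 * card ((\<Union>a\<in>V. H a) - V) \<le> 2 * (\<Sum>a\<in>V. card (H a))"
proof -
  have split: "(\<Sum>a\<in>V. card (H a)) = (\<Sum>a\<in>V. card (H a \<inter> V)) + (\<Sum>a\<in>V. card (H a - V))"
    unfolding sum.distrib[symmetric]
    by (rule sum.cong) (use assms(2) in \<open>auto intro: card_Int_Diff\<close>)
  have u: "card ((\<Union>a\<in>V. H a) - V) \<le> (\<Sum>a\<in>V. card (H a - V))"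
  proof -
    have "(\<Union>a\<in>V. H a) - V = (\<Union>a\<in>V. H a - V)" by auto
    then show ?thesis using card_UN_le[OF assms(1), of "\<lambda>a. H a - V"] by simp
  qed
  define P where "P = (SIGMA a:V. H a \<inter> V)"
  have cP: "card P = (\<Sum>a\<in>V. card (H a \<inter> V))"
    unfolding P_def using assms(1,2) by (subst card_SigmaI) auto
  have finP: "finite P" unfolding P_def using assms(1,2) by auto
  define P1 where "P1 = {p\<in>P. fst p < snd p}"
  define P2 where "P2 = {p\<in>P. snd p < fst p}"
  define Dg where "Dg = (\<lambda>a. (a,a)) ` V"
  have cD: "card Dg = card V" unfolding Dg_def by (rule card_image) (simp add: inj_on_def)
  have sub: "Dg \<union> P1 \<union> P2 \<subseteq> P" unfolding Dg_def P1_def P2_def P_def using assms(3) by auto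
  have d1: "Dg \<inter> P1 = {}" unfolding Dg_def P1_def by auto
  have d2: "(Dg \<union> P1) \<inter> P2 = {}" unfolding Dg_def P1_def P2_def by auto
  have fs: "finite Dg" "finite P1" "finite P2" using finP sub by (meson finite_subset le_supE)+
  have c3: "card Dg + card P1 + card P2 \<le> card P"
    using card_mono[OF finP sub] card_Un_disjoint[OF _ _ d2] card_Un_disjoint[OF _ _ d1] fs by simp
  define C where "C = {p\<in>V\<times>V. fst p < snd p}"
  have Csub: "C \<subseteq> P1 \<union> prod.swap ` P2"
  proof
    fix p assume p: "p \<in> C"
    obtain a x where ax: "p = (a,x)" by (cases p)
    have a: "a \<in> V" "x \<in> V" "a < x" using p ax C_def by auto
    show "p \<in> P1 \<union> prod.swap ` P2"
    proof (cases "x \<in> H a")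
      case True then have "p \<in> P1" using a ax unfolding P1_def P_def by auto
      then show ?thesis by blast
    next
      case False then have "a \<in> H x" using pc a by auto
      then have "(x,a) \<in> P2" using a unfolding P2_def P_def by auto
      then show ?thesis using ax by (metis UnI2 image_eqI swap_simp)
    qed
  qed
  have "card C \<le> card P1 + card P2"
  proof -
    have "card C \<le> card (P1 \<union> prod.swap ` P2)" using card_mono[OF _ Csub] fs by auto
    also have "\<dots> \<le> card P1 + card (prod.swap ` P2)" by (rule card_Un_le)
    also have "\<dots> \<le> card P1 + card P2" using card_image_le[OF fs(3)] by simp
    finally show ?thesis .
  qed
  moreover have "2 * card C = card V * (card V - 1)" unfolding C_def by (rule card_lt_pairs[OF assms(1)])
  ultimately show ?thesis using split u cP c3 cD by linarith
qed


lemma off_rel: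
  fixes N a x z :: nat
  assumes "a < N" "x < N" "z < N"
  shows "(x + N - a) mod N = ((z + N - a) mod N + N - (z + N - x) mod N) mod N"
proof -
  have N0: "0 < N" using assms by simp
  have lhs: "int ((x + N - a) mod N) = (int x - int a) mod int N"
  proof -
    have "int ((x + N - a) mod N) = int (x + N - a) mod int N" by (simp add: zmod_int)
    also have "int (x + N - a) = (int x - int a) + int N" using assms by simp
    finally show ?thesis by simp
  qed
  have "(z + N - x) mod N < N" using N0 by simp
  then have rhs0: "int ((z + N - a) mod N + N - (z + N - x) mod N) =
      int ((z + N - a) mod N) - int ((z + N - x) mod N) + int N" by simp
  have rhs: "int (((z + N - a) mod N + N - (z + N - x) mod N) mod N) = (int x - int a) mod int N"
  proof -
    have "int (((z + N - a) mod N + N - (z + N - x) mod N) mod N)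
        = int ((z + N - a) mod N + N - (z + N - x) mod N) mod int N" by (simp add: zmod_int)
    also have "\<dots> = (int ((z + N - a) mod N) - int ((z + N - x) mod N)) mod int N"
      unfolding rhs0 by simp
    also have "\<dots> = (int (z + N - a) mod int N - int (z + N - x) mod int N) mod int N"
      by (simp add: zmod_int)
    also have "\<dots> = (int (z + N - a) - int (z + N - x)) mod int N" by (simp add: mod_diff_eq)
    also have "int (z + N - a) - int (z + N - x) = int x - int a" using assms by simp
    finally show ?thesis .
  qed
  show ?thesis using lhs rhs by simp
qed

lemma source_exists:
  fixes N z :: nat and W :: "nat set" and L U :: "nat \<Rightarrow> nat" and In :: "nat \<Rightarrow> nat set"
  assumes fin: "finite W" and ne: "W \<noteq> {}" and Wlt: "\<forall>a\<in>W. a < N" and zN: "z < N"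
    and mem: "\<forall>a\<in>W. \<forall>x. x < N \<longrightarrow> (x \<in> In a \<longleftrightarrow> L a \<le> (x + N - a) mod N \<and> (x + N - a) mod N \<le> U a)"
    and L1: "\<forall>a\<in>W. 1 \<le> L a" and zin: "\<forall>a\<in>W. z \<in> In a"
    and pc: "\<forall>a\<in>W. \<forall>x\<in>W. a \<noteq> x \<longrightarrow> a \<notin> In x \<or> x \<notin> In a"
  shows "\<exists>a\<in>W. \<forall>x\<in>W. x \<notin> In a"
proof -
  define d where "d y = (z + N - y) mod N" for y
  have N0: "0 < N" using zN by simp
  have dlt: "d y < N" for y unfolding d_def using N0 by simp
  have off: "(x + N - a) mod N = (d a + N - d x) mod N" if "a \<in> W" "x \<in> W" for a x
  proof -
    have "a < N" "x < N" using Wlt that by auto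
    then show ?thesis using off_rel[of a N x z] zN unfolding d_def by simp
  qed
  have zbnd: "L a \<le> d a \<and> d a \<le> U a" if "a \<in> W" for a
  proof -
    have "z \<in> In a" using zin that by blast
    then show ?thesis using mem[rule_format, OF that zN] unfolding d_def by simp
  qed
  have fi: "finite (d ` W)" "d ` W \<noteq> {}" using fin ne by auto
  obtain lo where lo0: "lo \<in> W" "d lo = Max (d ` W)" using Max_in[OF fi] by auto
  have lo: "lo \<in> W" "\<forall>x\<in>W. d x \<le> d lo" using lo0 Max_ge[OF fi(1)] by auto
  obtain hi where hi0: "hi \<in> W" "d hi = Min (d ` W)" using Min_in[OF fi] by auto
  have hi: "hi \<in> W" "\<forall>x\<in>W. d hi \<le> d x" using hi0 Min_le[OF fi(1)] by auto
  have memW: "x \<in> In a \<longleftrightarrow> L a \<le> (d a + N - d x) mod N \<and> (d a + N - d x) mod N \<le> U a"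
    if "a \<in> W" "x \<in> W" for a x
  proof -
    have "x < N" using Wlt that by blast
    then have "x \<in> In a \<longleftrightarrow> L a \<le> (x + N - a) mod N \<and> (x + N - a) mod N \<le> U a" using mem[rule_format, OF that(1)] by simp
    then show ?thesis unfolding off[OF that] .
  qed
  have offlo: "(d lo + N - d x) mod N = d lo - d x" if "x \<in> W" for x
  proof -
    have le: "d x \<le> d lo" using lo(2) that by blast
    have lt: "d lo - d x < N" using dlt[of lo] by linarith
    have "d lo + N - d x = (d lo - d x) + N" using le by linarith
    then show ?thesis using lt by (metis mod_add_self2 mod_less)
  qed
  show ?thesis
  proof (cases "hi \<in> In lo")
    case False
    have nL: "\<not> (L lo \<le> d lo - d hi)" using False memW[OF lo(1) hi(1)] offlo[OF hi(1)] zbnd[OF lo(1)] by auto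
    have "\<forall>x\<in>W. x \<notin> In lo"
    proof
      fix x assume xW: "x \<in> W"
      have "d hi \<le> d x" using hi(2) xW by blast
      then have "d lo - d x \<le> d lo - d hi" by (simp add: diff_le_mono2)
      then show "x \<notin> In lo" using memW[OF lo(1) xW] offlo[OF xW] \<open>\<not> (L lo \<le> d lo - d hi)\<close> by auto
    qed
    then show ?thesis using lo(1) by blast
  next
    case True
    have "lo \<noteq> hi"
    proof
      assume "lo = hi"
      then have "lo \<in> In lo" using True by simp
      then have "L lo \<le> (d lo + N - d lo) mod N" using memW[OF lo(1) lo(1)] by blast
      moreover have "1 \<le> L lo" using L1 lo(1) by blast
      ultimately show False by simp
    qed
    then have nlo: "lo \<notin> In hi" using pc lo(1) hi(1) True by blast
    have "\<forall>x\<in>W. x \<notin> In hi"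
    proof
      fix x assume xW: "x \<in> W"
      show "x \<notin> In hi"
      proof (cases "d x = d hi")
        case True
        then have "(d hi + N - d x) mod N = 0" by simp
        moreover have "1 \<le> L hi" using L1 hi(1) by blast
        ultimately show ?thesis using memW[OF hi(1) xW] by auto
      next
        case False
        moreover have "d hi \<le> d x" using hi(2) xW by blast
        ultimately have dx: "d hi < d x" by simp
        have "d x \<le> d lo" using lo(2) xW by blast
        then have dlo: "d hi < d lo" using dx by simp
        have e1: "(d hi + N - d x) mod N = d hi + N - d x" using dx dlt[of x] by simp
        have e2: "(d hi + N - d lo) mod N = d hi + N - d lo" using dlo dlt[of lo] by simp
        have "L hi \<le> d hi + N - d lo" using zbnd[OF hi(1)] dlt[of lo] by linarith
        then have "\<not> (d hi + N - d lo \<le> U hi)" using nlo memW[OF hi(1) lo(1)] e2 by auto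
        moreover have "d hi + N - d lo \<le> d hi + N - d x"
        proof -
          have "d x \<le> d lo" using lo(2) xW by blast
          then show ?thesis using dlt[of lo] by linarith
        qed
        ultimately have "\<not> (d hi + N - d x \<le> U hi)" by linarith
        then show ?thesis using memW[OF hi(1) xW] e1 by auto
      qed
    qed
    then show ?thesis using hi(1) by blast
  qed
qed


lemma mod_add_inj:
  fixes N o1 o2 a :: nat
  assumes "o1 < N" "o2 < N" "(a + o1) mod N = (a + o2) mod N"
  shows "o1 = o2"
proof -
  have key: "p = q" if "p \<le> q" "q < N" "(a+p) mod N = (a+q) mod N" for p q :: nat
  proof -
    have "N dvd (a+q) - (a+p)" using mod_eq_dvd_iff_nat[of "a+p" "a+q" N] that by simp
    then have d: "N dvd q - p" by simp
    have "q - p < N" using that by simp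
    then have "q - p = 0" using d by (metis dvd_imp_le neq0_conv not_le)
    then show ?thesis using that(1) by simp
  qed
  show ?thesis
  proof (cases "o1 \<le> o2")
    case True then show ?thesis using key assms by blast
  next
    case False then show ?thesis using key[of o2 o1] assms by simp
  qed
qed

definition Tset :: "nat \<Rightarrow> nat \<Rightarrow> (crown_elem \<times> crown_elem) set \<Rightarrow> nat \<Rightarrow> nat set" where
  "Tset n k S a = {t. t \<le> k \<and> (CA a, CB ((a + t) mod (n+k))) \<in> S}"

definition Vset :: "nat \<Rightarrow> nat \<Rightarrow> (crown_elem \<times> crown_elem) set \<Rightarrow> nat set" where
  "Vset n k S = {a. a < n+k \<and> Tset n k S a \<noteq> {}}"

definition InS :: "nat \<Rightarrow> nat \<Rightarrow> (crown_elem \<times> crown_elem) set \<Rightarrow> nat \<Rightarrow> nat set" where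
  "InS n k S a = (\<lambda>w. (a + w) mod (n+k)) ` plusset (Tset n k S a) n"

definition HS :: "nat \<Rightarrow> nat \<Rightarrow> (crown_elem \<times> crown_elem) set \<Rightarrow> nat \<Rightarrow> nat set" where
  "HS n k S a = {0..<n+k} - InS n k S a"

lemma Tset_sub: "Tset n k S a \<subseteq> {..k}" unfolding Tset_def by auto
lemma Tset_finite: "finite (Tset n k S a)" by (rule finite_subset[OF Tset_sub]) simp
lemma Vset_finite: "finite (Vset n k S)" by (rule finite_subset[of _ "{..<n+k}"]) (auto simp: Vset_def)

lemma plusset_range:
  assumes "T \<subseteq> {..k}" "2 \<le> n"
  shows "plusset T n \<subseteq> {1..<n+k}"
  unfolding plusset_def using assms by (auto; fastforce)

lemma card_S_le:
  assumes "S \<subseteq> crown_Inc n k"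
  shows "card S \<le> (\<Sum>a\<in>Vset n k S. card (Tset n k S a))"
proof -
  let ?f = "\<lambda>a t. (CA a, CB ((a + t) mod (n+k)))"
  have sub: "S \<subseteq> (\<Union>a\<in>Vset n k S. ?f a ` Tset n k S a)"
  proof
    fix p assume p: "p \<in> S"
    then obtain i j where ij: "p = (CA i, CB j)" "i < n+k" "j < n+k" "crown_inc_idx n k i j"
      using assms unfolding crown_Inc_def by blast
    then obtain t where t: "t \<le> k" "j = (i + t) mod (n+k)" unfolding crown_inc_idx_def by blast
    have "t \<in> Tset n k S i" using t p ij unfolding Tset_def by auto
    then have "i \<in> Vset n k S" using ij unfolding Vset_def by auto
    then show "p \<in> (\<Union>a\<in>Vset n k S. ?f a ` Tset n k S a)"
      using \<open>t \<in> Tset n k S i\<close> ij t by blast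
  qed
  have fin: "finite (\<Union>a\<in>Vset n k S. ?f a ` Tset n k S a)" using Vset_finite Tset_finite by blast
  have "card S \<le> card (\<Union>a\<in>Vset n k S. ?f a ` Tset n k S a)" by (rule card_mono[OF fin sub])
  also have "\<dots> \<le> (\<Sum>a\<in>Vset n k S. card (?f a ` Tset n k S a))" by (rule card_UN_le[OF Vset_finite])
  also have "\<dots> \<le> (\<Sum>a\<in>Vset n k S. card (Tset n k S a))"
    by (rule sum_mono) (rule card_image_le[OF Tset_finite])
  finally show ?thesis .
qed

lemma InS_sub: "InS n k S a \<subseteq> {0..<n+k}" if "0 < n + k"
  unfolding InS_def using that by auto

lemma card_InS:
  assumes "2 \<le> n"
  shows "card (InS n k S a) = card (plusset (Tset n k S a) n)"
  unfolding InS_def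
proof (rule card_image, rule inj_onI)
  fix x y assume "x \<in> plusset (Tset n k S a) n" "y \<in> plusset (Tset n k S a) n"
    "(a + x) mod (n+k) = (a + y) mod (n+k)"
  moreover have "plusset (Tset n k S a) n \<subseteq> {1..<n+k}" by (rule plusset_range[OF Tset_sub assms])
  ultimately have "x < n+k" "y < n+k" by auto
  then show "x = y" using mod_add_inj[of x "n+k" y a] \<open>(a + x) mod (n+k) = (a + y) mod (n+k)\<close> by blast
qed

lemma card_HS:
  assumes "2 \<le> n"
  shows "card (HS n k S a) = n + k - card (plusset (Tset n k S a) n)"
proof -
  have "card (HS n k S a) = card {0..<n+k} - card (InS n k S a)"
    unfolding HS_def using assms InS_sub[of n k S a] by (subst card_Diff_subset) (auto intro: finite_subset)
  then show ?thesis using card_InS[OF assms] by simp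
qed

lemma self_in_HS:
  assumes "2 \<le> n" "a < n + k"
  shows "a \<in> HS n k S a"
proof -
  have "a \<notin> InS n k S a"
  proof
    assume "a \<in> InS n k S a"
    then obtain w where w: "w \<in> plusset (Tset n k S a) n" "a = (a + w) mod (n+k)" unfolding InS_def by auto
    have "w \<in> {1..<n+k}" using w(1) plusset_range[OF Tset_sub[of n k S a] assms(1)] by blast
    moreover have "(a + 0) mod (n+k) = (a + w) mod (n+k)" using w(2) assms(2) by simp
    ultimately have "0 = w" using assms(1) by (intro mod_add_inj[of 0 "n+k" w a]) auto
    then show False using \<open>w \<in> {1..<n+k}\<close> by simp
  qed
  then show ?thesis unfolding HS_def using assms by auto
qed

lemma InS_less:
  assumes "2 \<le> n" "x \<in> InS n k S a"
  shows "\<exists>b. (CA a, CB b) \<in> S \<and> crown_less n k (CA x) (CB b)"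
proof -
  obtain w where w: "w \<in> plusset (Tset n k S a) n" "x = (a + w) mod (n+k)" using assms(2) unfolding InS_def by auto
  then obtain t where t: "t \<in> Tset n k S a" "t + 1 \<le> w" "w \<le> t + n - 1" unfolding plusset_def by auto
  define b where "b = (a + t) mod (n+k)"
  have tk: "t \<le> k" and inS: "(CA a, CB b) \<in> S" using t(1) unfolding Tset_def b_def by auto
  have "\<not> crown_inc_idx n k x b"
  proof
    assume "crown_inc_idx n k x b"
    then obtain t' where t': "t' \<le> k" "b = (x + t') mod (n+k)" unfolding crown_inc_idx_def by blast
    have "(a + t + 0) mod (n+k) = (a + t + ((w - t) + t')) mod (n+k)"
    proof -
      have "(a + t + 0) mod (n+k) = b" using b_def by simp
      also have "\<dots> = ((a + w) mod (n+k) + t') mod (n+k)" using t' w(2) by simp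
      also have "\<dots> = (a + w + t') mod (n+k)" by (simp add: mod_add_left_eq)
      also have "\<dots> = (a + t + ((w - t) + t')) mod (n+k)" using t(2) by (simp add: add.assoc)
      finally show ?thesis .
    qed
    moreover have "(w - t) + t' < n + k" using t t' assms(1) by linarith
    ultimately have "0 = (w - t) + t'" using mod_add_inj[of 0 "n+k" "(w - t) + t'" "a+t"] assms(1) by auto
    then show False using t(2) by simp
  qed
  moreover have "x < n + k" "b < n + k" using w(2) b_def assms(1) by auto
  ultimately show ?thesis using inS unfolding crown_less_def by blast
qed

lemma pair_cond:
  assumes "2 \<le> n" "G_independent n k S" "a \<in> Vset n k S" "x \<in> Vset n k S"
  shows "a \<in> HS n k S x \<or> x \<in> HS n k S a"
proof (rule ccontr)
  assume "\<not> (a \<in> HS n k S x \<or> x \<in> HS n k S a)"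
  then have "a \<in> InS n k S x" "x \<in> InS n k S a" using assms(3,4) unfolding HS_def Vset_def by auto
  then obtain b b' where b: "(CA x, CB b) \<in> S" "crown_less n k (CA a) (CB b)"
    and b': "(CA a, CB b') \<in> S" "crown_less n k (CA x) (CB b')"
    using InS_less[OF assms(1)] by blast
  have "G_adj n k (CA a, CB b') (CA x, CB b)" unfolding G_adj_def using b b' by simp
  then show False using assms(2) b b' unfolding G_independent_def by blast
qed


definition gappy :: "nat \<Rightarrow> nat \<Rightarrow> (crown_elem \<times> crown_elem) set \<Rightarrow> nat \<Rightarrow> bool" where
  "gappy n k S a \<longleftrightarrow> (\<exists>t0\<in>Tset n k S a. (\<exists>s\<in>Tset n k S a. t0 < s) \<and>
      (\<forall>s\<in>Tset n k S a. t0 < s \<longrightarrow> t0 + n \<le> s))"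

lemma mod_rep:
  fixes a x w N :: nat
  assumes "a < N" "x < N" "w < N"
  shows "x = (a + w) mod N \<longleftrightarrow> w = (x + N - a) mod N"
proof -
  have N0: "0 < N" using assms by simp
  have x_eq: "x = (a + (x + N - a) mod N) mod N"
  proof -
    have "(a + (x + N - a) mod N) mod N = (a + (x + N - a)) mod N" by (simp add: mod_add_right_eq)
    also have "a + (x + N - a) = x + N" using assms by simp
    finally show ?thesis using assms by simp
  qed
  have wlt: "(x + N - a) mod N < N" using N0 by simp
  show ?thesis
  proof
    assume "x = (a + w) mod N"
    then have "(a + w) mod N = (a + (x + N - a) mod N) mod N" using x_eq by simp
    then show "w = (x + N - a) mod N" using mod_add_inj[OF assms(3) wlt] by blast
  next
    assume "w = (x + N - a) mod N"
    then show "x = (a + w) mod N" using x_eq by simp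
  qed
qed

lemma mem_interval:
  assumes "2 \<le> n" "a \<in> Vset n k S" "\<not> gappy n k S a" "x < n + k"
  shows "x \<in> InS n k S a \<longleftrightarrow> Min (Tset n k S a) + 1 \<le> (x + (n+k) - a) mod (n+k) \<and>
            (x + (n+k) - a) mod (n+k) \<le> Max (Tset n k S a) + n - 1"
proof -
  let ?T = "Tset n k S a"
  have Tne: "?T \<noteq> {}" and aN: "a < n+k" using assms(2) unfolding Vset_def by auto
  have ng: "\<forall>t0\<in>?T. (\<exists>s\<in>?T. t0 < s) \<longrightarrow> (\<exists>s\<in>?T. t0 < s \<and> s < t0 + n)"
    using assms(3) unfolding gappy_def by (meson not_le)
  have P: "plusset ?T n = {Min ?T + 1 .. Max ?T + n - 1}"
    by (rule plusset_interval[OF Tset_finite Tne assms(1) ng])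
  have Psub: "plusset ?T n \<subseteq> {1..<n+k}" by (rule plusset_range[OF Tset_sub assms(1)])
  have "x \<in> InS n k S a \<longleftrightarrow> (\<exists>w\<in>plusset ?T n. x = (a + w) mod (n+k))" unfolding InS_def by auto
  also have "\<dots> \<longleftrightarrow> (\<exists>w\<in>plusset ?T n. w = (x + (n+k) - a) mod (n+k))"
  proof (rule bex_cong[OF refl])
    fix w assume "w \<in> plusset ?T n"
    then have "w < n + k" using Psub by auto
    then show "x = (a + w) mod (n+k) \<longleftrightarrow> w = (x + (n+k) - a) mod (n+k)" by (rule mod_rep[OF aN assms(4)])
  qed
  also have "\<dots> \<longleftrightarrow> (x + (n+k) - a) mod (n+k) \<in> plusset ?T n" by auto
  finally show ?thesis unfolding P by simp
qed

lemma less_in_InS: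
  assumes "2 \<le> n" "S \<subseteq> crown_Inc n k" "(CA a, CB b) \<in> S" "crown_less n k (CA x) (CB b)"
  shows "x \<in> InS n k S a"
proof -
  let ?N = "n + k"
  obtain t where t: "t \<le> k" "b = (a + t) mod ?N" "a < ?N" "b < ?N"
    using assms(2,3) unfolding crown_Inc_def crown_inc_idx_def by blast
  have tT: "t \<in> Tset n k S a" using t assms(3) unfolding Tset_def by auto
  have xN: "x < ?N" and ninc: "\<not> crown_inc_idx n k x b" using assms(4) unfolding crown_less_def by auto
  define d where "d = (x + ?N - b) mod ?N"
  have dlt: "d < ?N" using d_def assms(1) by simp
  have xbd: "x = (b + d) mod ?N" using mod_rep[OF t(4) xN dlt] d_def by simp
  have d0: "d \<noteq> 0"
  proof
    assume "d = 0"
    then have "b = (x + 0) mod ?N" using xbd t(4) by simp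
    then show False using ninc unfolding crown_inc_idx_def by blast
  qed
  have dn: "d \<le> n - 1"
  proof (rule ccontr)
    assume "\<not> d \<le> n - 1"
    then have "n \<le> d" by simp
    define t' where "t' = ?N - d"
    have t'k: "t' \<le> k" using \<open>n \<le> d\<close> t'_def by simp
    have "(x + t') mod ?N = ((b + d) mod ?N + t') mod ?N" using xbd by simp
    also have "\<dots> = (b + d + t') mod ?N" by (simp add: mod_add_left_eq)
    also have "b + d + t' = b + ?N" using dlt t'_def by simp
    also have "(b + ?N) mod ?N = b" using t(4) by simp
    finally have "b = (x + t') mod ?N" by simp
    then show False using ninc t'k unfolding crown_inc_idx_def by blast
  qed
  have "t + d \<in> plusset (Tset n k S a) n" unfolding plusset_def using tT d0 dn by force
  moreover have "x = (a + (t + d)) mod ?N"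
  proof -
    have "x = ((a + t) mod ?N + d) mod ?N" using xbd t(2) by simp
    also have "\<dots> = (a + (t + d)) mod ?N" by (simp add: mod_add_left_eq add.assoc)
    finally show ?thesis .
  qed
  ultimately show ?thesis unfolding InS_def by blast
qed

lemma ground_finite: "finite (crown_ground n k)"
  unfolding crown_ground_def by auto

lemma rev_from_uncovered:
  assumes n2: "2 \<le> n" and SI: "S \<subseteq> crown_Inc n k" and ind: "G_independent n k S"
    and zN: "z < n + k" and unc: "\<forall>a\<in>Vset n k S. z \<notin> HS n k S a"
    and ng: "\<forall>a\<in>Vset n k S. \<not> gappy n k S a"
  shows "reversible n k S"
proof -
  let ?G = "crown_ground n k"
  define Q where "Q = {(x,y). crown_less n k x y} \<union> {(b,a). (a,b) \<in> S}"
  have cl_ground: "x \<in> ?G \<and> y \<in> ?G" if "crown_less n k x y" for x y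
    using that unfolding crown_less_def crown_ground_def by auto
  have S_ground: "a \<in> ?G \<and> b \<in> ?G" if "(a,b) \<in> S" for a b
    using that SI unfolding crown_Inc_def crown_ground_def by auto
  have Qsub: "Q \<subseteq> ?G \<times> ?G" unfolding Q_def using cl_ground S_ground by auto
  have src: "\<forall>Y\<subseteq>?G. Y \<noteq> {} \<longrightarrow> (\<exists>y\<in>Y. \<forall>w\<in>Y. (w,y) \<notin> Q)"
  proof (intro allI impI)
    fix Y assume Y: "Y \<subseteq> ?G" "Y \<noteq> {}"
    show "\<exists>y\<in>Y. \<forall>w\<in>Y. (w,y) \<notin> Q"
    proof (cases "\<exists>a. CA a \<in> Y \<and> \<not> (\<exists>b. CB b \<in> Y \<and> (CA a, CB b) \<in> S)")
      case True
      then obtain a where a: "CA a \<in> Y" "\<not> (\<exists>b. CB b \<in> Y \<and> (CA a, CB b) \<in> S)" by blast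
      have "\<forall>w\<in>Y. (w, CA a) \<notin> Q"
      proof
        fix w assume wY: "w \<in> Y"
        show "(w, CA a) \<notin> Q"
        proof
          assume "(w, CA a) \<in> Q"
          then consider "crown_less n k w (CA a)" | "(CA a, w) \<in> S" unfolding Q_def by blast
          then show False
          proof cases
            case 1 then show ?thesis unfolding crown_less_def by auto
          next
            case 2
            then obtain b where "w = CB b" using SI unfolding crown_Inc_def by blast
            then show ?thesis using a 2 wY by blast
          qed
        qed
      qed
      then show ?thesis using a(1) by blast
    next
      case notA: False
      show ?thesis
      proof (cases "\<exists>b. CB b \<in> Y \<and> \<not> (\<exists>x. CA x \<in> Y \<and> crown_less n k (CA x) (CB b))")
        case True
        then obtain b where b: "CB b \<in> Y" "\<not> (\<exists>x. CA x \<in> Y \<and> crown_less n k (CA x) (CB b))" by blast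
        have "\<forall>w\<in>Y. (w, CB b) \<notin> Q"
        proof
          fix w assume wY: "w \<in> Y"
          show "(w, CB b) \<notin> Q"
          proof
            assume "(w, CB b) \<in> Q"
            then consider "crown_less n k w (CB b)" | "(CB b, w) \<in> S" unfolding Q_def by blast
            then show False
            proof cases
              case 1
              then obtain x where "w = CA x" unfolding crown_less_def by blast
              then show ?thesis using b 1 wY by blast
            next
              case 2 then show ?thesis using SI unfolding crown_Inc_def by blast
            qed
          qed
        qed
        then show ?thesis using b(1) by blast
      next
        case notB: False
        obtain y0 where y0: "y0 \<in> Y" using Y(2) by blast
        have exA: "\<exists>a. CA a \<in> Y"
        proof (cases y0)
          case (CA a) then show ?thesis using y0 by blast
        next
          case (CB b)
          then obtain x where "CA x \<in> Y" using notB y0 by blast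
          then show ?thesis by blast
        qed
        define W where "W = {a. CA a \<in> Y}"
        have Wne: "W \<noteq> {}" using exA W_def by blast
        have WV: "W \<subseteq> Vset n k S"
        proof
          fix a assume "a \<in> W"
          then have "CA a \<in> Y" using W_def by simp
          then obtain b where "(CA a, CB b) \<in> S" using notA by blast
          then obtain t where "t \<le> k" "b = (a + t) mod (n+k)" "a < n+k"
            using SI unfolding crown_Inc_def crown_inc_idx_def by blast
          then have "t \<in> Tset n k S a" using \<open>(CA a, CB b) \<in> S\<close> unfolding Tset_def by auto
          then show "a \<in> Vset n k S" using \<open>a < n+k\<close> unfolding Vset_def by auto
        qed
        have Wfin: "finite W" using WV Vset_finite finite_subset by blast
        have "\<exists>a\<in>W. \<forall>x\<in>W. x \<notin> InS n k S a"
        proof (rule source_exists[where N="n+k" and z=z and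
              L="\<lambda>a. Min (Tset n k S a) + 1" and U="\<lambda>a. Max (Tset n k S a) + n - 1"])
          show "finite W" by (rule Wfin)
          show "W \<noteq> {}" by (rule Wne)
          show "\<forall>a\<in>W. a < n + k" using WV unfolding Vset_def by auto
          show "z < n + k" by (rule zN)
          show "\<forall>a\<in>W. \<forall>x. x < n + k \<longrightarrow> (x \<in> InS n k S a \<longleftrightarrow>
                Min (Tset n k S a) + 1 \<le> (x + (n+k) - a) mod (n+k) \<and>
                (x + (n+k) - a) mod (n+k) \<le> Max (Tset n k S a) + n - 1)"
            using mem_interval[OF n2] WV ng by blast
          show "\<forall>a\<in>W. 1 \<le> Min (Tset n k S a) + 1" by simp
          show "\<forall>a\<in>W. z \<in> InS n k S a" using unc WV zN unfolding HS_def by auto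
          show "\<forall>a\<in>W. \<forall>x\<in>W. a \<noteq> x \<longrightarrow> a \<notin> InS n k S x \<or> x \<notin> InS n k S a"
          proof (intro ballI impI)
            fix a x assume ax: "a \<in> W" "x \<in> W" "a \<noteq> x"
            have "a \<in> HS n k S x \<or> x \<in> HS n k S a" using pair_cond[OF n2 ind] WV ax by blast
            then show "a \<notin> InS n k S x \<or> x \<notin> InS n k S a" unfolding HS_def by blast
          qed
        qed
        then obtain a where a: "a \<in> W" "\<forall>x\<in>W. x \<notin> InS n k S a" by blast
        have "CA a \<in> Y" using a W_def by simp
        then obtain b where b: "CB b \<in> Y" "(CA a, CB b) \<in> S" using notA by blast
        then obtain x where x: "CA x \<in> Y" "crown_less n k (CA x) (CB b)" using notB by blast
        have "x \<in> InS n k S a" by (rule less_in_InS[OF n2 SI b(2) x(2)])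
        moreover have "x \<in> W" using x W_def by simp
        ultimately show ?thesis using a by blast
      qed
    qed
  qed
  obtain L where L: "L \<subseteq> ?G \<times> ?G" "strict_linear_order_on ?G L" "Q \<subseteq> L"
    using lin_ext_exists[OF ground_finite Qsub src] by blast
  have "linear_extension n k L" unfolding linear_extension_def using L Q_def by auto
  moreover have "\<forall>(a,b)\<in>S. (b,a) \<in> L" using L(3) Q_def by auto
  ultimately show ?thesis unfolding reversible_def by blast
qed


lemma sq_nonneg_int: "0 \<le> (x::int) * (x + 1)"
proof (cases "0 \<le> x")
  case True then show ?thesis by simp
next
  case False then have "x + 1 \<le> 0" by simp
  then show ?thesis using False by (simp add: mult_nonpos_nonpos)
qed

lemma arith1: "2*m*(k+1) - m*(m-1) \<le> (k+1)*(k+2::int)"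
proof -
  have "(k+1)*(k+2) - (2*m*(k+1) - m*(m-1)) = (k+1-m)*((k+1-m)+1)" by (simp add: algebra_simps)
  then show ?thesis using sq_nonneg_int[of "k+1-m"] by linarith
qed

lemma arith2: "2*m*(k+2) - m*(m-1) \<le> (k+2)*(k+3::int)"
proof -
  have "(k+2)*(k+3) - (2*m*(k+2) - m*(m-1)) = (k+2-m)*((k+2-m)+1)" by (simp add: algebra_simps)
  then show ?thesis using sq_nonneg_int[of "k+2-m"] by linarith
qed

lemma int_mm1: "int (m * (m - 1)) = int m * (int m - 1)"
  by (cases m) (auto simp: algebra_simps)

lemma int_mm2: "int m * int (m - Suc 0) = int m * (int m - 1)"
  by (cases m) (auto simp: algebra_simps)

theorem theorem1p6:
  fixes n k :: nat and S :: "(crown_elem \<times> crown_elem) set"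
  assumes "n \<ge> 3" and "n \<le> k"
    and "S \<subseteq> crown_Inc n k"
    and "G_independent n k S"
    and "\<not> reversible n k S"
  shows "real (card S) \<le> real ((k + 1) * (k + 2)) / 2 + 2 - real n"
proof -
  have n2: "2 \<le> n" using assms(1) by simp
  let ?V = "Vset n k S"
  let ?T = "Tset n k S"
  let ?H = "HS n k S"
  define m where "m = card ?V"
  have Vfin: "finite ?V" by (rule Vset_finite)
  have Vlt: "\<forall>a\<in>?V. a < n + k" unfolding Vset_def by auto
  have cT: "card (?T a) + card (?H a) \<le> k + 2" if "a \<in> ?V" for a
  proof -
    have ne: "?T a \<noteq> {}" using that unfolding Vset_def by auto
    have "card (?T a) + (n - 2) \<le> card (plusset (?T a) n)"
      by (rule plusset_card1[OF Tset_finite ne n2])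
    moreover have "card (plusset (?T a) n) \<le> n + k"
      using card_mono[OF _ plusset_range[OF Tset_sub[of n k S a] n2]] by simp
    ultimately show ?thesis using card_HS[OF n2, of k S a] n2 by linarith
  qed
  have cG: "card (?T a) + card (?H a) + (n - 2) \<le> k + 2" if gp: "gappy n k S a" for a
  proof -
    obtain t0 s0 where g: "t0 \<in> ?T a" "s0 \<in> ?T a" "t0 < s0" "\<forall>s\<in>?T a. t0 < s \<longrightarrow> t0 + n \<le> s"
      using gp unfolding gappy_def by blast
    have "card (?T a) + 2*(n - 2) \<le> card (plusset (?T a) n)"
      by (rule plusset_card2[OF Tset_finite n2 g])
    moreover have "card (plusset (?T a) n) \<le> n + k"
      using card_mono[OF _ plusset_range[OF Tset_sub[of n k S a] n2]] by simp
    ultimately show ?thesis using card_HS[OF n2, of k S a] n2 by linarith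
  qed
  have Hfin: "\<forall>a\<in>?V. finite (?H a)" unfolding HS_def by auto
  have self: "\<forall>a\<in>?V. a \<in> ?H a" using self_in_HS[OF n2] Vlt by blast
  have pcond: "\<forall>a\<in>?V. \<forall>x\<in>?V. a \<noteq> x \<longrightarrow> a \<in> ?H x \<or> x \<in> ?H a"
    using pair_cond[OF n2 assms(4)] by blast
  have PC: "2 * m + m * (m - 1) + 2 * card ((\<Union>a\<in>?V. ?H a) - ?V) \<le> 2 * (\<Sum>a\<in>?V. card (?H a))"
    unfolding m_def by (rule pair_count[OF Vfin Hfin self pcond])
  have cS: "card S \<le> (\<Sum>a\<in>?V. card (?T a))" by (rule card_S_le[OF assms(3)])
  have sumTH: "(\<Sum>a\<in>?V. card (?T a)) + (\<Sum>a\<in>?V. card (?H a)) \<le> m * (k + 2)"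
  proof -
    have "(\<Sum>a\<in>?V. card (?T a) + card (?H a)) \<le> card ?V * (k + 2)"
      using sum_bounded_above[of ?V "\<lambda>a. card (?T a) + card (?H a)" "k+2"] cT by simp
    then show ?thesis unfolding m_def sum.distrib by simp
  qed
  have main: "2 * card S + 2 * n \<le> (k + 1) * (k + 2) + 4"
  proof (cases "\<exists>a0\<in>?V. gappy n k S a0")
    case True
    then obtain a0 where a0: "a0 \<in> ?V" "gappy n k S a0" by blast
    have sumG: "(\<Sum>a\<in>?V. card (?T a) + card (?H a)) + (n - 2) \<le> m * (k + 2)"
    proof -
      define f where "f a = card (?T a) + card (?H a)" for a
      have s1: "(\<Sum>a\<in>?V. f a) = f a0 + (\<Sum>a\<in>?V - {a0}. f a)"
        by (rule sum.remove[OF Vfin a0(1)])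
      have s2: "(\<Sum>a\<in>?V - {a0}. f a) \<le> card (?V - {a0}) * (k + 2)"
        using sum_bounded_above[of "?V - {a0}" f "k+2"] cT unfolding f_def by simp
      have s3: "card (?V - {a0}) = m - 1" unfolding m_def using a0(1) Vfin by simp
      have s4: "1 \<le> m" unfolding m_def using a0(1) Vfin card_gt_0_iff[of ?V] by (simp add: Suc_le_eq) blast
      have s5: "f a0 + (n - 2) \<le> k + 2" unfolding f_def by (rule cG[OF a0(2)])
      have s6: "(m - 1) * (k + 2) + (k + 2) = m * (k + 2)"
      proof -
        obtain m' where "m = Suc m'" using s4 by (cases m) auto
        then show ?thesis by simp
      qed
      have s2': "(\<Sum>a\<in>?V - {a0}. f a) \<le> (m - 1) * (k + 2)" using s2 unfolding s3 .
      have "(\<Sum>a\<in>?V. f a) + (n - 2) \<le> m * (k + 2)" using s1 s2' s5 s6 by linarith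
      then show ?thesis unfolding f_def .
    qed
    have sumG': "(\<Sum>a\<in>?V. card (?T a)) + (\<Sum>a\<in>?V. card (?H a)) + (n - 2) \<le> m * (k + 2)"
      using sumG unfolding sum.distrib by simp
    define ST where "ST = (\<Sum>a\<in>?V. card (?T a))"
    define SH where "SH = (\<Sum>a\<in>?V. card (?H a))"
    have i1: "int (card S) \<le> int ST" using cS unfolding ST_def by (simp only: of_nat_le_iff)
    have "ST + SH + (n - 2) \<le> m * (k + 2)" using sumG' unfolding ST_def SH_def .
    then have "int (ST + SH + (n - 2)) \<le> int (m * (k + 2))" by (simp only: of_nat_le_iff)
    then have i2: "int ST + int SH + (int n - 2) \<le> int m * (int k + 2)"
      using n2 by (simp add: of_nat_diff algebra_simps)
    have i3: "2 * int m + int m * (int m - 1) \<le> 2 * int SH"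
    proof -
      have "2 * m + m * (m - 1) \<le> 2 * SH" using PC unfolding SH_def by linarith
      then have "int (2 * m + m * (m - 1)) \<le> int (2 * SH)" by (simp only: of_nat_le_iff)
      then show ?thesis by (simp add: int_mm2)
    qed
    have i4: "2 * int m * (int k + 1) - int m * (int m - 1) \<le> (int k + 1) * (int k + 2)"
      by (rule arith1)
    have e1: "int m * (int k + 2) = int m * int k + 2 * int m" by (simp add: algebra_simps)
    have e2: "2 * int m * (int k + 1) = 2 * (int m * int k) + 2 * int m" by (simp add: algebra_simps)
    have e3: "(int k + 1) * (int k + 2) = int k * int k + 3 * int k + 2" by (simp add: algebra_simps)
    have fin: "2 * int (card S) + 2 * int n \<le> (int k + 1) * (int k + 2) + 4"
      using i1 i2 i3 i4 e1 e2 e3 by linarith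
    have q1: "int (2 * card S + 2 * n) = 2 * int (card S) + 2 * int n" by simp
    have q2: "int ((k + 1) * (k + 2) + 4) = (int k + 1) * (int k + 2) + 4" by (simp add: algebra_simps)
    have "int (2 * card S + 2 * n) \<le> int ((k + 1) * (k + 2) + 4)" unfolding q1 q2 by (rule fin)
    then show ?thesis by (simp only: of_nat_le_iff)
  next
    case False
    have cover: "\<forall>z<n+k. \<exists>a\<in>?V. z \<in> ?H a"
    proof (rule ccontr)
      assume "\<not> (\<forall>z<n+k. \<exists>a\<in>?V. z \<in> ?H a)"
      then obtain z where z: "z < n + k" "\<forall>a\<in>?V. z \<notin> ?H a" by blast
      have "reversible n k S" by (rule rev_from_uncovered[OF n2 assms(3) assms(4) z(1) z(2)]) (use False in blast)
      then show False using assms(5) by blast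
    qed
    have Ufin: "finite ((\<Union>a\<in>?V. ?H a) - ?V)" using Vfin Hfin by blast
    have "{0..<n+k} - ?V \<subseteq> (\<Union>a\<in>?V. ?H a) - ?V" using cover by auto
    then have "card ({0..<n+k} - ?V) \<le> card ((\<Union>a\<in>?V. ?H a) - ?V)" using card_mono Ufin by blast
    moreover have "card ({0..<n+k} - ?V) = n + k - m"
      unfolding m_def using Vlt by (subst card_Diff_subset) (auto simp: Vfin)
    ultimately have cov: "n + k - m \<le> card ((\<Union>a\<in>?V. ?H a) - ?V)" by simp
    have mle: "m \<le> n + k" unfolding m_def using Vlt card_mono[of "{0..<n+k}" ?V] by fastforce
    define ST where "ST = (\<Sum>a\<in>?V. card (?T a))"
    define SH where "SH = (\<Sum>a\<in>?V. card (?H a))"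
    have i1: "int (card S) \<le> int ST" using cS unfolding ST_def by (simp only: of_nat_le_iff)
    have "int (ST + SH) \<le> int (m * (k + 2))" using sumTH unfolding ST_def SH_def by (simp only: of_nat_le_iff)
    then have i2: "int ST + int SH \<le> int m * (int k + 2)" by (simp add: algebra_simps)
    have i3: "2 * int m + int m * (int m - 1) + 2 * (int n + int k - int m) \<le> 2 * int SH"
    proof -
      have "2 * m + m * (m - 1) + 2 * (n + k - m) \<le> 2 * SH" using PC cov unfolding SH_def by linarith
      then have "int (2 * m + m * (m - 1) + 2 * (n + k - m)) \<le> int (2 * SH)" by (simp only: of_nat_le_iff)
      then show ?thesis using mle by (simp add: of_nat_diff int_mm2)
    qed
    have i4: "2 * int m * (int k + 2) - int m * (int m - 1) \<le> (int k + 2) * (int k + 3)"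
      by (rule arith2)
    have e1: "int m * (int k + 2) = int m * int k + 2 * int m" by (simp add: algebra_simps)
    have e2: "2 * int m * (int k + 2) = 2 * (int m * int k) + 4 * int m" by (simp add: algebra_simps)
    have e3: "(int k + 1) * (int k + 2) = int k * int k + 3 * int k + 2" by (simp add: algebra_simps)
    have e4: "(int k + 2) * (int k + 3) = int k * int k + 5 * int k + 6" by (simp add: algebra_simps)
    have fin: "2 * int (card S) + 2 * int n \<le> (int k + 1) * (int k + 2) + 4"
      using i1 i2 i3 i4 by (simp add: algebra_simps)
    have q1: "int (2 * card S + 2 * n) = 2 * int (card S) + 2 * int n" by simp
    have q2: "int ((k + 1) * (k + 2) + 4) = (int k + 1) * (int k + 2) + 4" by (simp add: algebra_simps)
    have "int (2 * card S + 2 * n) \<le> int ((k + 1) * (k + 2) + 4)" unfolding q1 q2 by (rule fin)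
    then show ?thesis by (simp only: of_nat_le_iff)
  qed
  have "real (2 * card S + 2 * n) \<le> real ((k + 1) * (k + 2) + 4)" using main by (simp only: of_nat_le_iff)
  then have "2 * real (card S) + 2 * real n \<le> real ((k + 1) * (k + 2)) + 4" by simp
  then show ?thesis by linarith
qed

end
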